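(* Let $X$ be a smoothly bounded planar domain and let $f(t,z)=z+a(t)\bar z$ be a holomorphic motion of $X$ (with $t\in\mathbb D$). Then $f$ is trivial if and only if $a\equiv0$ on $\mathbb D$.
   Context: A holomorphic motion of a planar domain $X$ is a map $f:\mathbb D\times X\to\mathbb C$ with $f(0,z)=z$ for all $z\in X$, $f(\cdot,z)$ holomorphic on $\mathbb D$ for every $z\in X$, and $f(t,\cdot)$ injective on $X$ for every $t\in\mathbb D$. With $F(t,z)=(t,f(t,z))$, the graph of $f$ is $F(\mathbb D\times X)$; $f$ is called trivial if its graph equals the graph of a holomorphic motion $g$ of $X$ such that $g$ is holomorphic on $\mathbb D\times X$. *)

theory Defs
  imports "HOL-Analysis.Analysis"
begin

definition smooth_jordan_curve :: "(real \<Rightarrow> complex) \<Rightarrow> bool" where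
  "smooth_jordan_curve \<gamma> \<longleftrightarrow>
     (\<exists>D :: nat \<Rightarrow> real \<Rightarrow> complex. D 0 = \<gamma> \<and>
        (\<forall>n t. (D n has_vector_derivative D (Suc n) t) (at t)) \<and>
        (\<forall>t. D 1 t \<noteq> 0)) \<and>
     (\<forall>t. \<gamma> (t + 1) = \<gamma> t) \<and>
     inj_on \<gamma> {0..<1}"

definition smoothly_bounded_domain :: "complex set \<Rightarrow> bool" where
  "smoothly_bounded_domain X \<longleftrightarrow>
     open X \<and> connected X \<and> X \<noteq> {} \<and> bounded X \<and>
     (\<exists>\<Gamma>. finite \<Gamma> \<and> (\<forall>\<gamma>\<in>\<Gamma>. smooth_jordan_curve \<gamma>) \<and>
        (\<forall>\<gamma>\<in>\<Gamma>. \<forall>\<delta>\<in>\<Gamma>. \<gamma> \<noteq> \<delta> \<longrightarrow> range \<gamma> \<inter> range \<delta> = {}) \<and>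
        frontier X = (\<Union>\<gamma>\<in>\<Gamma>. range \<gamma>))"

definition holomorphic_motion :: "(complex \<Rightarrow> complex \<Rightarrow> complex) \<Rightarrow> complex set \<Rightarrow> bool" where
  "holomorphic_motion f X \<longleftrightarrow>
     (\<forall>z\<in>X. f 0 z = z) \<and>
     (\<forall>z\<in>X. (\<lambda>t. f t z) holomorphic_on ball 0 1) \<and>
     (\<forall>t\<in>ball 0 1. inj_on (f t) X)"

definition motion_graph :: "(complex \<Rightarrow> complex \<Rightarrow> complex) \<Rightarrow> complex set \<Rightarrow> (complex \<times> complex) set" where
  "motion_graph f X = (\<lambda>(t, z). (t, f t z)) ` (ball 0 1 \<times> X)"

definition holomorphic2_on :: "(complex \<Rightarrow> complex \<Rightarrow> complex) \<Rightarrow> (complex \<times> complex) set \<Rightarrow> bool" where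
  "holomorphic2_on g S \<longleftrightarrow>
     (\<forall>p\<in>S. \<exists>A B :: complex.
        ((\<lambda>(t, z). g t z) has_derivative (\<lambda>(h, k). A * h + B * k)) (at p))"

definition trivial_motion :: "(complex \<Rightarrow> complex \<Rightarrow> complex) \<Rightarrow> complex set \<Rightarrow> bool" where
  "trivial_motion f X \<longleftrightarrow>
     (\<exists>g. holomorphic_motion g X \<and> holomorphic2_on g (ball 0 1 \<times> X) \<and>
          motion_graph g X = motion_graph f X)"

end

theory Submission
  imports Defs "HOL-Complex_Analysis.Cauchy_Integral_Formula" "HOL-Complex_Analysis.Conformal_Mappings"
begin


definition T2 :: "complex \<Rightarrow> real^2" where "T2 z = vector [Re z, Im z]"
definition T2i :: "real^2 \<Rightarrow> complex" where "T2i v = Complex (v$1) (v$2)"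

lemma T2i_T2[simp]: "T2i (T2 z) = z"
  by (simp add: T2_def T2i_def)
lemma T2_T2i[simp]: "T2 (T2i v) = v"
  by (simp add: T2_def T2i_def vec_eq_iff forall_2)

lemma T2_eq_iff[simp]: "T2 x = T2 y \<longleftrightarrow> x = y"
  by (metis T2i_T2)

lemma linear_T2: "linear T2"
  by (auto simp: linear_iff T2_def vec_eq_iff forall_2)
lemma linear_T2i: "linear T2i"
  by (auto simp: linear_iff T2i_def complex_eq_iff)

lemma bl_T2: "bounded_linear T2" using linear_T2 linear_conv_bounded_linear by blast
lemma bl_T2i: "bounded_linear T2i" using linear_T2i linear_conv_bounded_linear by blast

lemma T2_meas[measurable]: "T2 \<in> borel_measurable borel"
  by (intro borel_measurable_continuous_onI linear_continuous_on bl_T2)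
lemma T2i_meas[measurable]: "T2i \<in> borel_measurable borel"
  by (intro borel_measurable_continuous_onI linear_continuous_on bl_T2i)

lemma T2i_vimage_box: "T2i -` box l u = box (T2 l) (T2 u)"
proof (rule set_eqI)
  fix v :: "real^2"
  have "v \<in> T2i -` box l u \<longleftrightarrow> (Re l < v$1 \<and> v$1 < Re u \<and> Im l < v$2 \<and> v$2 < Im u)"
    by (simp add: mem_box Basis_complex_def inner_complex_def T2i_def)
  also have "\<dots> \<longleftrightarrow> v \<in> box (T2 l) (T2 u)"
    by (simp add: mem_box_cart T2_def forall_2 conj_commute conj_left_commute)
  finally show "v \<in> T2i -` box l u \<longleftrightarrow> v \<in> box (T2 l) (T2 u)" .
qed

lemma distr_T2i: "distr lborel borel T2i = (lborel :: complex measure)"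
proof (rule lborel_eqI[symmetric])
  fix l u :: complex
  assume le: "\<And>b. b \<in> Basis \<Longrightarrow> l \<bullet> b \<le> u \<bullet> b"
  have "emeasure (distr lborel borel T2i) (box l u) = emeasure lborel (T2i -` box l u)"
    by (subst emeasure_distr) auto
  also have "\<dots> = emeasure lborel (box (T2 l) (T2 u))" by (simp add: T2i_vimage_box)
  also have "\<dots> = (\<Prod>b\<in>Basis. (u - l) \<bullet> b)"
  proof -
    have B2: "(Basis :: (real^2) set) = {axis 1 1, axis 2 1}"
      by (auto simp: Basis_vec_def UNIV_2)
    have ne: "axis (1::2) (1::real) \<noteq> axis 2 1" by (simp add: axis_eq_axis)
    have le2: "\<forall>b\<in>Basis. T2 l \<bullet> b \<le> T2 u \<bullet> b"
      using le[of 1] le[of "\<i>"] by (auto simp: B2 T2_def inner_axis Basis_complex_def)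
    show ?thesis
      using le2 ne by (simp add: emeasure_lborel_box_eq B2 inner_axis T2_def Basis_complex_def
           ennreal_mult' [symmetric] prod_nonneg)
  qed
  finally show "emeasure (distr lborel borel T2i) (box l u) = (\<Prod>b\<in>Basis. (u - l) \<bullet> b)" .
qed simp

lemma T2_image: "T2 ` A = T2i -` A"
  by (auto simp: image_iff) (metis T2_T2i)

lemma emeasure_T2: "A \<in> sets borel \<Longrightarrow> emeasure lborel (T2 ` A) = emeasure lborel A"
  using emeasure_distr[of T2i lborel borel A] by (simp add: distr_T2i T2_image)

lemma measure_T2: "A \<in> sets borel \<Longrightarrow> measure lborel (T2 ` A) = measure lborel A"
  by (simp add: measure_def emeasure_T2)

lemma nn_integral_T2i:
  assumes "f \<in> borel_measurable borel"
  shows "(\<integral>\<^sup>+ v. f (T2i v) \<partial>lborel) = (\<integral>\<^sup>+ z. f z \<partial>lborel)"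
  using nn_integral_distr[of T2i lborel borel f] assms by (simp add: distr_T2i)

lemma det_T2: "det (matrix (T2 \<circ> (\<lambda>h. \<alpha> * h + \<beta> * cnj h) \<circ> T2i)) = (cmod \<alpha>)^2 - (cmod \<beta>)^2"
proof -
  have e1: "T2i (axis 1 1) = 1" and e2: "T2i (axis 2 1) = \<i>"
    by (simp_all add: T2i_def axis_def complex_eq_iff)
  have m: "matrix f $ i $ j = f (axis j 1) $ i" for f :: "real^2 \<Rightarrow> real^2" and i j
    by (simp add: matrix_def)
  have "det (matrix (T2 \<circ> (\<lambda>h. \<alpha> * h + \<beta> * cnj h) \<circ> T2i))
      = (Re \<alpha> + Re \<beta>) * (Re \<alpha> - Re \<beta>) - (Im \<beta> - Im \<alpha>) * (Im \<alpha> + Im \<beta>)"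
    by (simp add: det_2 m e1 e2 T2_def)
  also have "\<dots> = ((Re \<alpha>)^2 + (Im \<alpha>)^2) - ((Re \<beta>)^2 + (Im \<beta>)^2)"
    by algebra
  also have "\<dots> = (cmod \<alpha>)^2 - (cmod \<beta>)^2"
    by (simp only: cmod_power2)
  finally show ?thesis .
qed

lemma cv_complex:
  fixes \<phi> \<alpha> \<beta> :: "complex \<Rightarrow> complex" and S :: "complex set"
  assumes S: "open S" and inj: "inj_on \<phi> S"
    and der: "\<And>x. x \<in> S \<Longrightarrow> (\<phi> has_derivative (\<lambda>h. \<alpha> x * h + \<beta> x * cnj h)) (at x)"
    and cont: "continuous_on S (\<lambda>x. \<bar>(cmod (\<alpha> x))^2 - (cmod (\<beta> x))^2\<bar>)"
    and bnd: "bounded (\<phi> ` S)" and imgB: "\<phi> ` S \<in> sets borel"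
  shows "((\<lambda>x. \<bar>(cmod (\<alpha> x))^2 - (cmod (\<beta> x))^2\<bar>) has_integral measure lborel (\<phi> ` S)) S"
proof -
  define J where "J x = \<bar>(cmod (\<alpha> x))^2 - (cmod (\<beta> x))^2\<bar>" for x
  define \<Phi> where "\<Phi> = T2 \<circ> \<phi> \<circ> T2i"
  define S' where "S' = T2 ` S"
  have S'eq: "S' = T2i -` S" by (simp add: S'_def T2_image)
  have openS': "open S'" unfolding S'eq
    by (intro continuous_open_vimage S linear_continuous_at bl_T2i)
  have derS: "(\<Phi> has_derivative (T2 \<circ> (\<lambda>h. \<alpha> (T2i v) * h + \<beta> (T2i v) * cnj h) \<circ> T2i)) (at v within S')"
    if "v \<in> S'" for v
  proof -
    have "T2i v \<in> S" using that S'eq by auto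
    have d1: "(T2i has_derivative T2i) (at v)" by (rule bounded_linear_imp_has_derivative[OF bl_T2i])
    have d2: "(T2 has_derivative T2) (at (\<phi> (T2i v)))" by (rule bounded_linear_imp_has_derivative[OF bl_T2])
    have "((\<lambda>x. T2 (\<phi> (T2i x))) has_derivative (\<lambda>x. T2 (\<alpha> (T2i v) * T2i x + \<beta> (T2i v) * cnj (T2i x)))) (at v)"
      by (rule has_derivative_compose[OF has_derivative_compose[OF d1 der[OF \<open>T2i v \<in> S\<close>]] d2])
    then show ?thesis unfolding \<Phi>_def by (simp add: o_def has_derivative_at_withinI)
  qed
  have injP: "inj_on \<Phi> S'"
    using inj unfolding \<Phi>_def S'_def inj_on_def by auto
  have imgP: "\<Phi> ` S' = T2 ` (\<phi> ` S)"
    by (simp add: \<Phi>_def S'_def image_comp o_def)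
  have bP: "bounded (\<Phi> ` S')" unfolding imgP
    by (rule bounded_linear_image[OF bnd bl_T2])
  have mP: "\<Phi> ` S' \<in> sets borel" unfolding imgP T2_image
    using imgB by (simp add: measurable_sets_borel[OF T2i_meas])
  have lmP: "\<Phi> ` S' \<in> lmeasurable"
    using bP mP by (intro bounded_set_imp_lmeasurable) auto
  have "((\<lambda>v. \<bar>det (matrix (T2 \<circ> (\<lambda>h. \<alpha> (T2i v) * h + \<beta> (T2i v) * cnj h) \<circ> T2i))\<bar>)
          has_integral measure lebesgue (\<Phi> ` S')) S'"
  proof -
    have "S' \<in> sets borel" by (rule borel_open[OF openS'])
    then have Sl: "S' \<in> sets lebesgue" by simp
    show ?thesis
      using has_measure_differentiable_image[OF Sl derS injP, of "measure lebesgue (\<Phi> ` S')"] lmP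
      by blast
  qed
  then have hi: "((\<lambda>v. J (T2i v)) has_integral measure lborel (\<phi> ` S)) S'"
    using mP imgB by (simp add: det_T2 J_def imgP measure_T2)
  have nn1: "(\<integral>\<^sup>+ v. ennreal (J (T2i v)) * indicator S' v \<partial>lborel) = ennreal (measure lborel (\<phi> ` S))"
    by (rule nn_integral_has_integral_lebesgue'[OF _ hi]) (simp add: J_def)
  have measJ: "(\<lambda>x. indicator S x *\<^sub>R J x) \<in> borel_measurable borel"
    using cont S by (intro borel_measurable_continuous_on_indicator) (auto simp: J_def)
  have "(\<integral>\<^sup>+ z. ennreal (indicator S z *\<^sub>R J z) \<partial>lborel) = (\<integral>\<^sup>+ v. ennreal (indicator S (T2i v) *\<^sub>R J (T2i v)) \<partial>lborel)"
    by (rule nn_integral_T2i[symmetric], rule measurable_compose[OF measJ]) measurable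
  also have "\<dots> = (\<integral>\<^sup>+ v. ennreal (J (T2i v)) * indicator S' v \<partial>lborel)"
    by (intro nn_integral_cong) (auto simp: S'eq indicator_def)
  finally have nn2: "(\<integral>\<^sup>+ z. ennreal (indicator S z *\<^sub>R J z) \<partial>lborel) = ennreal (measure lborel (\<phi> ` S))"
    using nn1 by simp
  have "((\<lambda>z. indicator S z *\<^sub>R J z) has_integral measure lborel (\<phi> ` S)) UNIV"
    by (rule nn_integral_has_integral[OF measJ _ nn2]) (auto simp: J_def indicator_def)
  moreover have "(\<lambda>z. indicator S z *\<^sub>R J z) = (\<lambda>z. if z \<in> S then J z else 0)"
    by (auto simp: indicator_def fun_eq_iff)
  ultimately have hJ: "(J has_integral measure lborel (\<phi> ` S)) S"
    using has_integral_restrict_UNIV[of S J] by simp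
  have Jeq: "J = (\<lambda>x. \<bar>(cmod (\<alpha> x))^2 - (cmod (\<beta> x))^2\<bar>)" by (rule ext) (simp add: J_def)
  show ?thesis using hJ unfolding Jeq .
qed



lemma vd_circ: "x \<in> {0..1} \<Longrightarrow>
   vector_derivative (circlepath z r) (at x within {0..1}) = vector_derivative (circlepath z r) (at x)"
  by (simp add: vector_derivative_circlepath01 vector_derivative_circlepath)

lemma hci_circle:
  assumes "(f has_contour_integral i) (circlepath z r)"
  shows "((\<lambda>x. f (circlepath z r x) * vector_derivative (circlepath z r) (at x)) has_integral i) {0..1}"
proof -
  have h: "((\<lambda>x. f (circlepath z r x) * vector_derivative (circlepath z r) (at x within {0..1})) has_integral i) {0..1}"
    using assms by (simp add: has_contour_integral_def)
  show ?thesis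
    by (rule has_integral_eq[OF _ h]) (simp add: vector_derivative_circlepath01 vector_derivative_circlepath)
qed

lemma mean_value_circle:
  fixes h :: "complex \<Rightarrow> complex"
  assumes h: "h holomorphic_on ball 0 1" and r: "0 < r" "r < 1"
  shows "((\<lambda>s. h (circlepath 0 r s)) has_integral h 0) {0..1}"
proof -
  have sub: "cball 0 r \<subseteq> ball (0::complex) 1" using r by auto
  have ci: "((\<lambda>u. h u / (u - 0)) has_contour_integral (2 * of_real pi * \<i> * h 0)) (circlepath 0 r)"
    by (rule Cauchy_integral_circlepath)
       (use r sub in \<open>auto intro: holomorphic_on_imp_continuous_on holomorphic_on_subset[OF h]\<close>)
  have hi: "((\<lambda>x. h (circlepath 0 r x) / circlepath 0 r x * vector_derivative (circlepath 0 r) (at x))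
                has_integral (2 * of_real pi * \<i> * h 0)) {0..1}"
    using hci_circle[OF ci] by simp
  have eq: "h (circlepath 0 r x) / circlepath 0 r x * vector_derivative (circlepath 0 r) (at x)
            = (2 * of_real pi * \<i>) * h (circlepath 0 r x)" for x
    using r unfolding vector_derivative_circlepath by (simp add: circlepath field_simps)
  define c where "c = 2 * of_real pi * (\<i>::complex)"
  have c0: "c \<noteq> 0" by (simp add: c_def)
  have "((\<lambda>x. c * h (circlepath 0 r x)) has_integral (c * h 0)) {0..1}"
    using hi unfolding eq c_def .
  then have "((\<lambda>x. inverse c * (c * h (circlepath 0 r x))) has_integral inverse c * (c * h 0)) {0..1}"
    by (rule has_integral_mult_right)
  then show ?thesis using c0 by (simp add: mult.assoc[symmetric])
qed

lemma inv_mult_cancel: "(c::complex) \<noteq> 0 \<Longrightarrow> inverse c * (c * d) = d"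
  by (simp add: mult.assoc[symmetric])

lemma dist_circ: "0 \<le> \<rho> \<Longrightarrow> dist w (circlepath w \<rho> x) = \<rho>"
  by (simp add: circlepath dist_norm norm_mult norm_exp_eq_Re)

locale setting =
  fixes g :: "complex \<Rightarrow> complex \<Rightarrow> complex" and X :: "complex set"
  assumes openX: "open X"
    and h2: "holomorphic2_on g (ball 0 1 \<times> X)"
    and hol_t: "\<And>z. z \<in> X \<Longrightarrow> (\<lambda>t. g t z) holomorphic_on ball 0 1"
    and g0: "\<And>z. z \<in> X \<Longrightarrow> g 0 z = z"
begin

lemma h2_facts:
  assumes t: "t \<in> ball 0 1" and w: "w \<in> X"
  shows "(g t has_field_derivative deriv (g t) w) (at w)"
    and "isCont (\<lambda>p. g (fst p) (snd p)) (t, w)"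
proof -
  obtain A B where hd: "((\<lambda>(t, z). g t z) has_derivative (\<lambda>(h, k). A * h + B * k)) (at (t,w))"
    using h2 t w unfolding holomorphic2_on_def by blast
  have hp: "((\<lambda>z. (t, z)) has_derivative (\<lambda>k. (0, k))) (at w)"
    by (rule has_derivative_Pair[OF has_derivative_const has_derivative_ident])
  have "((\<lambda>z. (\<lambda>(t, z). g t z) (t, z)) has_derivative (\<lambda>k. (\<lambda>(h, k). A * h + B * k) (0, k))) (at w)"
    by (rule has_derivative_compose[OF hp]) (use hd in simp)
  then have "(g t has_derivative (\<lambda>k. B * k)) (at w)" by simp
  then have hf: "(g t has_field_derivative B) (at w)" by (simp add: has_field_derivative_def)
  then show "(g t has_field_derivative deriv (g t) w) (at w)" using DERIV_imp_deriv by metis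
  have "isCont (\<lambda>(t, z). g t z) (t, w)" by (rule has_derivative_continuous[OF hd])
  then show "isCont (\<lambda>p. g (fst p) (snd p)) (t, w)" by (simp add: case_prod_unfold)
qed

lemma gcont: "continuous_on (ball 0 1 \<times> X) (\<lambda>p. g (fst p) (snd p))"
  by (intro continuous_at_imp_continuous_on) (auto intro: h2_facts(2))

lemma ghol: "t \<in> ball 0 1 \<Longrightarrow> g t holomorphic_on X"
  using h2_facts(1) openX by (auto simp: holomorphic_on_def field_differentiable_def
      intro: has_field_derivative_at_within)

lemma cauchy_B:
  assumes t: "t \<in> ball 0 1" and rho: "0 < \<rho>" "cball w0 \<rho> \<subseteq> X" and w: "w \<in> ball w0 \<rho>"
  shows "((\<lambda>x. g t (circlepath w0 \<rho> x) / (circlepath w0 \<rho> x - w)^2 * vector_derivative (circlepath w0 \<rho>) (at x))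
          has_integral (2 * of_real pi * \<i> * deriv (g t) w)) {0..1}"
proof -
  have bX: "ball w0 \<rho> \<subseteq> X" using rho(2) ball_subset_cball by blast
  have ci: "((\<lambda>u. g t u / (u - w) ^ Suc 1) has_contour_integral
      complex_of_real (2 * pi) * \<i> / fact 1 * (deriv ^^ 1) (g t) w) (circlepath w0 \<rho>)"
    by (rule Cauchy_has_contour_integral_higher_derivative_circlepath[OF
          holomorphic_on_imp_continuous_on[OF holomorphic_on_subset[OF ghol[OF t] rho(2)]]
          holomorphic_on_subset[OF ghol[OF t] bX] w])
  show ?thesis using hci_circle[OF ci] by (simp add: numeral_2_eq_2)
qed

lemma Bcont: "continuous_on (ball 0 1 \<times> X) (\<lambda>p. deriv (g (fst p)) (snd p))"
proof (intro continuous_at_imp_continuous_on ballI)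
  fix p :: "complex \<times> complex" assume p: "p \<in> ball 0 1 \<times> X"
  obtain t w where pe: "p = (t, w)" by fastforce
  have t: "t \<in> ball 0 1" and w: "w \<in> X" using p pe by auto
  obtain \<rho> where rho: "0 < \<rho>" "cball w \<rho> \<subseteq> X" using openX w open_contains_cball by blast
  define c where "c = circlepath w \<rho>"
  define U where "U = ball (0::complex) 1 \<times> ball w \<rho>"
  have openU: "open U" by (simp add: U_def open_Times)
  have pU: "p \<in> U" using t rho pe by (simp add: U_def)
  have cX: "c x \<in> X" for x
  proof -
    have "dist w (c x) = \<rho>" using rho by (simp add: c_def dist_circ)
    then show ?thesis using rho by auto
  qed
  have cw: "c x - snd q \<noteq> 0" if "q \<in> U" for x q
  proof -
    have "dist w (c x) = \<rho>" using rho by (simp add: c_def dist_circ)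
    moreover have "dist w (snd q) < \<rho>" using that by (auto simp: U_def)
    ultimately show ?thesis by auto
  qed
  have contc: "continuous_on A c" for A by (simp add: c_def circlepath continuous_intros)
  have contc': "continuous_on A (\<lambda>x. vector_derivative c (at x))" for A
    by (simp add: c_def vector_derivative_circlepath continuous_intros)
  have contG: "continuous_on (U \<times> cbox 0 1) (\<lambda>(q, x). g (fst q) (c x))"
  proof -
    have "continuous_on (U \<times> cbox 0 1) (\<lambda>y. (\<lambda>p. g (fst p) (snd p)) ((\<lambda>(q, x). (fst q, c x)) y))"
    proof (rule continuous_on_compose2[OF gcont])
      show "continuous_on (U \<times> cbox 0 1) (\<lambda>(q, x). (fst q, c x))"
        unfolding case_prod_unfold
        by (intro continuous_intros continuous_on_compose2[OF contc]) auto
      show "(\<lambda>(q, x). (fst q, c x)) ` (U \<times> cbox 0 1) \<subseteq> ball 0 1 \<times> X"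
        using cX by (auto simp: U_def)
    qed
    then show ?thesis by (simp add: case_prod_unfold)
  qed
  have contF: "continuous_on (U \<times> cbox 0 1)
     (\<lambda>(q, x). g (fst q) (c x) / (c x - snd q)^2 * vector_derivative c (at x))"
  proof -
    have c1: "continuous_on (U \<times> cbox 0 1) (\<lambda>y. c (snd y) - snd (fst y))"
      by (intro continuous_intros continuous_on_compose2[OF contc]) auto
    have c2: "continuous_on (U \<times> cbox 0 1) (\<lambda>y. vector_derivative c (at (snd y)))"
      by (intro continuous_on_compose2[OF contc'] continuous_on_snd) auto
    have "continuous_on (U \<times> cbox 0 1)
        (\<lambda>y. (\<lambda>(q, x). g (fst q) (c x)) y / (c (snd y) - snd (fst y))^2 * vector_derivative c (at (snd y)))"
      using cw by (intro continuous_intros contG c1 c2) auto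
    then show ?thesis by (simp add: case_prod_unfold)
  qed
  have ci: "continuous_on U (\<lambda>q. integral (cbox 0 1)
              (\<lambda>x. g (fst q) (c x) / (c x - snd q)^2 * vector_derivative c (at x)))"
    by (rule integral_continuous_on_param[OF contF])
  have eqU: "integral (cbox 0 1) (\<lambda>x. g (fst q) (c x) / (c x - snd q)^2 * vector_derivative c (at x))
               = (2 * of_real pi * \<i>) * deriv (g (fst q)) (snd q)" if "q \<in> U" for q
    using cauchy_B[of "fst q" \<rho> w "snd q"] that rho unfolding c_def
    by (auto simp: U_def mem_Times_iff intro!: integral_unique)
  have "continuous_on U (\<lambda>q. inverse (2 * of_real pi * \<i>) * integral (cbox 0 1)
              (\<lambda>x. g (fst q) (c x) / (c x - snd q)^2 * vector_derivative c (at x)))"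
    by (intro continuous_intros ci)
  moreover have eqU': "inverse (2 * of_real pi * \<i>) * integral (cbox 0 1)
              (\<lambda>x. g (fst q) (c x) / (c x - snd q)^2 * vector_derivative c (at x)) = deriv (g (fst q)) (snd q)"
    if "q \<in> U" for q
    by (subst eqU[OF that]) (rule inv_mult_cancel, simp)
  ultimately have "continuous_on U (\<lambda>q. deriv (g (fst q)) (snd q))"
    by (rule continuous_on_eq)
  then show "isCont (\<lambda>p. deriv (g (fst p)) (snd p)) p"
    using openU pU continuous_on_eq_continuous_at by blast
qed

lemma gamma_in: "0 \<le> r \<Longrightarrow> r < 1 \<Longrightarrow> circlepath 0 r s \<in> ball (0::complex) 1"
  by (simp add: circlepath norm_mult)

lemma cont_B_circle:
  assumes r: "0 \<le> r" "r < 1" and w: "w \<in> X"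
  shows "continuous_on A (\<lambda>s. deriv (g (circlepath 0 r s)) w)"
proof -
  have "continuous_on A (\<lambda>s. (\<lambda>p. deriv (g (fst p)) (snd p)) (circlepath 0 r s, w))"
    by (rule continuous_on_compose2[OF Bcont])
       (use r w gamma_in in \<open>auto simp: circlepath intro!: continuous_intros\<close>)
  then show ?thesis by simp
qed

lemma meanB:
  assumes w: "w \<in> X" and r: "0 < r" "r < 1"
  shows "((\<lambda>s. deriv (g (circlepath 0 r s)) w) has_integral 1) {0..1}"
proof -
  obtain \<rho> where rho: "0 < \<rho>" "cball w \<rho> \<subseteq> X" using openX w open_contains_cball by blast
  define c where "c = circlepath w \<rho>"
  define \<gamma> where "\<gamma> = circlepath (0::complex) r"
  define G where "G s u = g (\<gamma> s) (c u) / (c u - w)^2 * vector_derivative c (at u)" for s u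
  have cX: "c x \<in> X" for x
  proof -
    have "dist w (c x) = \<rho>" using rho by (simp add: c_def dist_circ)
    then show ?thesis using rho by auto
  qed
  have cw: "c x - w \<noteq> 0" for x
  proof -
    have "dist w (c x) = \<rho>" using rho by (simp add: c_def dist_circ)
    then show ?thesis using rho by auto
  qed
  have \<gamma>D: "\<gamma> s \<in> ball 0 1" for s using r gamma_in by (simp add: \<gamma>_def)
  have h1: "integral {0..1} (G s) = (2 * of_real pi * \<i>) * deriv (g (\<gamma> s)) w" for s
    using cauchy_B[OF \<gamma>D rho, of w] rho unfolding G_def c_def by (auto intro: integral_unique)
  have contc: "continuous_on A c" for A by (simp add: c_def circlepath continuous_intros)
  have contc': "continuous_on A (\<lambda>x. vector_derivative c (at x))" for A
    by (simp add: c_def vector_derivative_circlepath continuous_intros)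
  have contg: "continuous_on A \<gamma>" for A by (simp add: \<gamma>_def circlepath continuous_intros)
  have contG: "continuous_on (cbox (0,0) (1,1)) (\<lambda>(s, u). G s u)"
  proof -
    have a: "continuous_on (cbox (0::real,0::real) (1,1)) (\<lambda>y. (\<lambda>p. g (fst p) (snd p)) ((\<lambda>(s, u). (\<gamma> s, c u)) y))"
    proof (rule continuous_on_compose2[OF gcont])
      show "continuous_on (cbox (0::real,0::real) (1,1)) (\<lambda>(s, u). (\<gamma> s, c u))"
        unfolding case_prod_unfold
        by (intro continuous_intros continuous_on_compose2[OF contc] continuous_on_compose2[OF contg]) auto
      show "(\<lambda>(s, u). (\<gamma> s, c u)) ` cbox (0,0) (1,1) \<subseteq> ball 0 1 \<times> X"
        using cX \<gamma>D by auto
    qed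
    have c1: "continuous_on (cbox (0::real,0::real) (1,1)) (\<lambda>y. c (snd y) - w)"
      by (intro continuous_intros continuous_on_compose2[OF contc]) auto
    have c2: "continuous_on (cbox (0::real,0::real) (1,1)) (\<lambda>y. vector_derivative c (at (snd y)))"
      by (intro continuous_on_compose2[OF contc'] continuous_on_snd) auto
    have "continuous_on (cbox (0::real,0::real) (1,1))
        (\<lambda>y. (\<lambda>p. g (fst p) (snd p)) ((\<lambda>(s, u). (\<gamma> s, c u)) y) / (c (snd y) - w)^2 * vector_derivative c (at (snd y)))"
      using cw by (intro continuous_intros a c1 c2) auto
    then show ?thesis by (simp add: case_prod_unfold G_def)
  qed
  have swap: "integral (cbox 0 1) (\<lambda>s. integral (cbox 0 1) (G s)) =
              integral (cbox 0 1) (\<lambda>u. integral (cbox 0 1) (\<lambda>s. G s u))"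
    by (rule integral_swap_continuous) (use contG in simp)
  have inner: "integral {0..1} (\<lambda>s. G s u) = c u / (c u - w)^2 * vector_derivative c (at u)" for u
  proof -
    have "G s u = g (\<gamma> s) (c u) * (vector_derivative c (at u) / (c u - w)^2)" for s
      by (simp add: G_def)
    then have "integral {0..1} (\<lambda>s. G s u) = integral {0..1} (\<lambda>s. g (\<gamma> s) (c u)) * (vector_derivative c (at u) / (c u - w)^2)"
      by simp
    also have "integral {0..1} (\<lambda>s. g (\<gamma> s) (c u)) = g 0 (c u)"
      using mean_value_circle[OF hol_t[OF cX] r] by (auto simp: \<gamma>_def intro: integral_unique)
    finally show ?thesis using g0[OF cX] by simp
  qed
  have ci: "((\<lambda>u. u / (u - w) ^ Suc 1) has_contour_integral
      complex_of_real (2 * pi) * \<i> / fact 1 * (deriv ^^ 1) (\<lambda>u. u) w) (circlepath w \<rho>)"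
    by (rule Cauchy_has_contour_integral_higher_derivative_circlepath) (use rho in \<open>auto intro: continuous_intros\<close>)
  have outer: "((\<lambda>u. c u / (c u - w)^2 * vector_derivative c (at u)) has_integral 2 * of_real pi * \<i>) {0..1}"
    using hci_circle[OF ci] by (simp add: numeral_2_eq_2 c_def)
  have "integral {0..1} (\<lambda>s. (2 * of_real pi * \<i>) * deriv (g (\<gamma> s)) w) = 2 * of_real pi * \<i>"
    using swap outer by (simp add: h1[symmetric] inner integral_unique)
  then have "(2 * of_real pi * \<i>) * integral {0..1} (\<lambda>s. deriv (g (\<gamma> s)) w) = (2 * of_real pi * \<i>) * 1"
    by simp
  then have val: "integral {0..1} (\<lambda>s. deriv (g (\<gamma> s)) w) = 1"
    by (subst (asm) mult_left_cancel) auto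
  have "(\<lambda>s. deriv (g (\<gamma> s)) w) integrable_on {0..1}"
    by (rule integrable_continuous_interval) (use cont_B_circle[of r w] r w in \<open>simp add: \<gamma>_def\<close>)
  then have "((\<lambda>s. deriv (g (\<gamma> s)) w) has_integral integral {0..1} (\<lambda>s. deriv (g (\<gamma> s)) w)) {0..1}"
    by (rule integrable_integral)
  then have "((\<lambda>s. deriv (g (\<gamma> s)) w) has_integral 1) {0..1}" by (simp only: val)
  then show ?thesis by (simp add: \<gamma>_def)
qed

lemma sub_mean:
  assumes w: "w \<in> X" and r: "0 < r" "r < 1"
  shows "((\<lambda>s. (cmod (deriv (g (circlepath 0 r s)) w))^2) has_integral
            integral {0..1} (\<lambda>s. (cmod (deriv (g (circlepath 0 r s)) w))^2)) {0..1}"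
    and "1 \<le> integral {0..1} (\<lambda>s. (cmod (deriv (g (circlepath 0 r s)) w))^2)"
proof -
  define \<phi> where "\<phi> s = deriv (g (circlepath 0 r s)) w" for s
  have c: "continuous_on {0..1} \<phi>" unfolding \<phi>_def using cont_B_circle[of r w] r w by simp
  have c2: "continuous_on {0..1} (\<lambda>s. (cmod (\<phi> s))^2)" by (intro continuous_intros c)
  define I where "I = integral {0..1} (\<lambda>s. (cmod (\<phi> s))^2)"
  have hI: "((\<lambda>s. (cmod (\<phi> s))^2) has_integral I) {0..1}"
    unfolding I_def by (rule integrable_integral[OF integrable_continuous_interval[OF c2]])
  then show "((\<lambda>s. (cmod (deriv (g (circlepath 0 r s)) w))^2) has_integral
            integral {0..1} (\<lambda>s. (cmod (deriv (g (circlepath 0 r s)) w))^2)) {0..1}"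
    by (simp add: \<phi>_def I_def)
  have h1: "(\<phi> has_integral 1) {0..1}" unfolding \<phi>_def by (rule meanB[OF w r])
  have hRe: "((\<lambda>s. Re (\<phi> s)) has_integral 1) {0..1}"
    using has_integral_linear[OF h1 bounded_linear_Re] by (simp add: o_def)
  have hc: "((\<lambda>s::real. 1::real) has_integral 1) {0..1}"
    using has_integral_const_real[of "1::real" "0::real" 1] by simp
  have "((\<lambda>s. (cmod (\<phi> s))^2 - 2 * Re (\<phi> s) + 1) has_integral I - 2 * 1 + 1) {0..1}"
    by (intro has_integral_add has_integral_diff hI has_integral_mult_right hRe hc)
  moreover have "(cmod (\<phi> s))^2 - 2 * Re (\<phi> s) + 1 = (cmod (\<phi> s - 1))^2" for s
    unfolding cmod_power2 by (simp add: power2_eq_square algebra_simps)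
  ultimately have "((\<lambda>s. (cmod (\<phi> s - 1))^2) has_integral I - 1) {0..1}" by simp
  then have "0 \<le> I - 1" by (rule has_integral_nonneg) auto
  then show "1 \<le> integral {0..1} (\<lambda>s. (cmod (deriv (g (circlepath 0 r s)) w))^2)"
    by (simp add: I_def \<phi>_def)
qed

end



lemma linmap_facts:
  fixes a :: complex
  assumes a: "cmod a < 1"
  shows "(\<lambda>z. z + a * cnj z) ` X = (\<lambda>\<zeta>. (\<zeta> - a * cnj \<zeta>) / (1 - of_real ((cmod a)^2))) -` X"
    and "bounded_linear (\<lambda>z. z + a * cnj z)"
proof -
  define u where "u = (1 - of_real ((cmod a)^2) :: complex)"
  have aa: "a * cnj a = of_real ((cmod a)^2)" by (metis complex_norm_square)
  have au: "1 - a * cnj a = u" unfolding aa u_def ..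
  have lt: "(cmod a)^2 < 1" using a by (simp add: power_less_one_iff abs_square_less_1)
  have ur: "u = of_real (1 - (cmod a)^2)" by (simp add: u_def)
  have u0: "u \<noteq> 0" unfolding ur of_real_eq_0_iff using lt by linarith
  have cu: "cnj u = u" by (simp add: ur)
  define Li where "Li \<zeta> = (\<zeta> - a * cnj \<zeta>) / u" for \<zeta>
  have li1: "Li (z + a * cnj z) = z" for z
  proof -
    have "z + a * cnj z - a * cnj (z + a * cnj z) = z * (1 - a * cnj a)" by (simp add: algebra_simps)
    then have "Li (z + a * cnj z) = z * u / u" by (simp only: Li_def au)
    then show ?thesis using u0 by simp
  qed
  have li2: "Li \<zeta> + a * cnj (Li \<zeta>) = \<zeta>" for \<zeta>
  proof -
    have "cnj (Li \<zeta>) = (cnj \<zeta> - cnj a * \<zeta>) / u" by (simp add: Li_def cu)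
    then have "Li \<zeta> + a * cnj (Li \<zeta>) = ((\<zeta> - a * cnj \<zeta>) + a * (cnj \<zeta> - cnj a * \<zeta>)) / u"
      by (simp add: Li_def add_divide_distrib)
    also have "(\<zeta> - a * cnj \<zeta>) + a * (cnj \<zeta> - cnj a * \<zeta>) = \<zeta> * (1 - a * cnj a)" by (simp add: algebra_simps)
    also have "\<zeta> * (1 - a * cnj a) / u = \<zeta>" using u0 by (simp add: au)
    finally show ?thesis .
  qed
  have Lieq: "(\<lambda>\<zeta>. (\<zeta> - a * cnj \<zeta>) / (1 - of_real ((cmod a)^2))) = Li"
    by (simp add: fun_eq_iff Li_def u_def)
  show "(\<lambda>z. z + a * cnj z) ` X = (\<lambda>\<zeta>. (\<zeta> - a * cnj \<zeta>) / (1 - of_real ((cmod a)^2))) -` X"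
    unfolding Lieq
  proof (rule set_eqI, rule iffI)
    fix \<zeta> assume "\<zeta> \<in> (\<lambda>z. z + a * cnj z) ` X"
    then obtain z where "z \<in> X" "\<zeta> = z + a * cnj z" by auto
    then show "\<zeta> \<in> Li -` X" using li1[of z] by simp
  next
    fix \<zeta> assume "\<zeta> \<in> Li -` X"
    then have LX: "Li \<zeta> \<in> X" by simp
    have "\<zeta> = (\<lambda>z. z + a * cnj z) (Li \<zeta>)" using li2[of \<zeta>] by simp
    then show "\<zeta> \<in> (\<lambda>z. z + a * cnj z) ` X" using LX by (rule image_eqI)
  qed
  have "linear (\<lambda>z. z + a * cnj z)"
    by (auto simp: linear_iff algebra_simps scaleR_conv_of_real)
  then show "bounded_linear (\<lambda>z. z + a * cnj z)" by (simp add: linear_conv_bounded_linear)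
qed

lemma linmap_open:
  fixes a :: complex
  assumes a: "cmod a < 1" and X: "open X"
  shows "open ((\<lambda>z. z + a * cnj z) ` X)"
proof -
  have lt: "(cmod a)^2 < 1" using a by (simp add: power_less_one_iff abs_square_less_1)
  have e: "(1 - of_real ((cmod a)^2) :: complex) = of_real (1 - (cmod a)^2)"
    by (simp only: of_real_diff of_real_1)
  have nz: "(1 - of_real ((cmod a)^2) :: complex) \<noteq> 0"
    unfolding e of_real_eq_0_iff using lt by linarith
  show ?thesis unfolding linmap_facts(1)[OF a]
    by (intro continuous_open_vimage X) (use nz in \<open>auto intro!: continuous_intros\<close>)
qed

lemma exists_nonzero:
  fixes X :: "complex set"
  assumes "open X" "X \<noteq> {}"
  obtains z where "z \<in> X" "z \<noteq> 0"
proof -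
  obtain z0 where z0: "z0 \<in> X" using assms by auto
  obtain e where e: "e > 0" "ball z0 e \<subseteq> X" using assms(1) z0 open_contains_ball by blast
  show ?thesis
  proof (cases "z0 = 0")
    case True
    have "of_real (e/2) \<in> ball z0 e" using e True by (simp add: dist_norm)
    then show ?thesis using e True by (intro that[of "of_real (e/2)"]) auto
  next
    case False then show ?thesis using z0 that by blast
  qed
qed

theorem corollary1p9:
  fixes X :: "complex set" and a :: "complex \<Rightarrow> complex"
  assumes "smoothly_bounded_domain X"
    and "holomorphic_motion (\<lambda>t z. z + a t * cnj z) X"
  shows "trivial_motion (\<lambda>t z. z + a t * cnj z) X \<longleftrightarrow> (\<forall>t\<in>ball 0 1. a t = 0)"
proof -
  from assms(1) have openX: "open X" and neX: "X \<noteq> {}" and bdX: "bounded X"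
    by (auto simp: smoothly_bounded_domain_def)
  from assms(2) have f0: "\<And>z. z \<in> X \<Longrightarrow> z + a 0 * cnj z = z"
    and fhol: "\<And>z. z \<in> X \<Longrightarrow> (\<lambda>t. z + a t * cnj z) holomorphic_on ball 0 1"
    and finj: "\<And>t. t \<in> ball 0 1 \<Longrightarrow> inj_on (\<lambda>z. z + a t * cnj z) X"
    by (auto simp: holomorphic_motion_def)
  obtain z1 where z1: "z1 \<in> X" "z1 \<noteq> 0" using exists_nonzero[OF openX neX] by blast
  have a0: "a 0 = 0" using f0[OF z1(1)] z1(2) by simp
  have ahol: "a holomorphic_on ball 0 1"
  proof -
    have "(\<lambda>t. ((z1 + a t * cnj z1) - z1) / cnj z1) holomorphic_on ball 0 1"
      by (intro holomorphic_intros fhol[OF z1(1)]) (simp add: z1(2))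
    moreover have "(\<lambda>t. ((z1 + a t * cnj z1) - z1) / cnj z1) = a" using z1(2) by (auto simp: fun_eq_iff)
    ultimately show ?thesis by simp
  qed
  have acont: "continuous_on (ball 0 1) a" by (rule holomorphic_on_imp_continuous_on[OF ahol])
  show ?thesis
  proof
    assume "trivial_motion (\<lambda>t z. z + a t * cnj z) X"
    then obtain g where gm: "holomorphic_motion g X" and g2: "holomorphic2_on g (ball 0 1 \<times> X)"
      and gr: "motion_graph g X = motion_graph (\<lambda>t z. z + a t * cnj z) X"
      unfolding trivial_motion_def by blast
    interpret setting g X using openX g2 gm by unfold_locales (auto simp: holomorphic_motion_def)
    have ginj: "\<And>t. t \<in> ball 0 1 \<Longrightarrow> inj_on (g t) X" using gm by (simp add: holomorphic_motion_def)
    have img: "g t ` X = (\<lambda>z. z + a t * cnj z) ` X" if t: "t \<in> ball 0 1" for t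
    proof (rule set_eqI, rule iffI)
      fix y assume "y \<in> g t ` X"
      then obtain w where w: "w \<in> X" "y = g t w" by auto
      have "(t, y) \<in> motion_graph g X" unfolding motion_graph_def
        using t w by (auto intro!: image_eqI[where x="(t,w)"])
      then have "(t, y) \<in> motion_graph (\<lambda>t z. z + a t * cnj z) X" using gr by simp
      then show "y \<in> (\<lambda>z. z + a t * cnj z) ` X" unfolding motion_graph_def by auto
    next
      fix y assume "y \<in> (\<lambda>z. z + a t * cnj z) ` X"
      then obtain z where z: "z \<in> X" "y = z + a t * cnj z" by auto
      have "(t, y) \<in> motion_graph (\<lambda>t z. z + a t * cnj z) X" unfolding motion_graph_def
        using t z by (auto intro!: image_eqI[where x="(t,z)"])
      then have "(t, y) \<in> motion_graph g X" using gr by simp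
      then show "y \<in> g t ` X" unfolding motion_graph_def by auto
    qed
    have contA: "isCont a 0"
      using acont continuous_on_eq_continuous_at[of "ball 0 1" a] by auto
    obtain d where d: "d > 0" "\<And>t. dist t 0 < d \<Longrightarrow> dist (a t) (a 0) < 1/2"
      using contA[unfolded continuous_at_eps_delta, rule_format, of "1/2"] by auto
    define r0 where "r0 = min d (1/2)"
    have r0: "0 < r0" "r0 < 1" "\<And>t. cmod t < r0 \<Longrightarrow> cmod (a t) < 1/2"
      using d by (auto simp: r0_def a0 dist_norm)
    define M where "M = measure lborel X"
    have Xb: "X \<in> sets borel" using openX by (simp add: borel_open)
    have Xfin: "emeasure lborel X < \<infinity>" using bdX by (rule emeasure_bounded_finite)
    have Xlm: "X \<in> lmeasurable" using bdX Xb by (intro bounded_set_imp_lmeasurable) auto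
    have Mpos: "0 < M"
    proof -
      have "\<not> negligible X" by (rule open_not_negligible[OF openX neX])
      then have "measure lebesgue X \<noteq> 0" using negligible_iff_measure0[OF Xlm] by simp
      moreover have "measure lebesgue X = M" using Xb by (simp add: M_def)
      ultimately show ?thesis using measure_nonneg[of lborel X] unfolding M_def by linarith
    qed
    have hM: "((\<lambda>x. 1) has_integral M) X" unfolding M_def by (rule has_integral_measure_lborel[OF Xb Xfin])
    have eX: "emeasure lborel X = ennreal M"
      using Xfin by (simp add: M_def emeasure_eq_ennreal_measure)
    have key1: "((\<lambda>w. (cmod (deriv (g t) w))^2) has_integral (1 - (cmod (a t))^2) * M) X"
      if t: "cmod t < r0" for t
    proof -
      have tD: "t \<in> ball 0 1" using t r0 by simp
      have at: "cmod (a t) < 1" using r0(3)[OF t] by simp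
      have bdf: "bounded ((\<lambda>z. z + a t * cnj z) ` X)"
        by (rule bounded_linear_image[OF bdX linmap_facts(2)[OF at]])
      have opf: "open ((\<lambda>z. z + a t * cnj z) ` X)" by (rule linmap_open[OF at openX])
      have c1: "((\<lambda>w. \<bar>(cmod (deriv (g t) w))^2 - (cmod ((\<lambda>_. 0::complex) w))^2\<bar>)
                   has_integral measure lborel (g t ` X)) X"
      proof (rule cv_complex[OF openX ginj[OF tD]])
        show "(g t has_derivative (\<lambda>h. deriv (g t) x * h + (\<lambda>_. 0) x * cnj h)) (at x)" if "x \<in> X" for x
          using h2_facts(1)[OF tD that] by (simp add: has_field_derivative_def)
        have "continuous_on X (\<lambda>x. (\<lambda>p. deriv (g (fst p)) (snd p)) (t, x))"
          by (rule continuous_on_compose2[OF Bcont]) (use tD in \<open>auto intro!: continuous_intros\<close>)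
        then have "continuous_on X (\<lambda>x. (cmod ((\<lambda>p. deriv (g (fst p)) (snd p)) (t, x)))^2)"
          by (intro continuous_intros)
        then show "continuous_on X (\<lambda>x. \<bar>(cmod (deriv (g t) x))^2 - (cmod ((\<lambda>_. 0::complex) x))^2\<bar>)"
          by simp
        show "bounded (g t ` X)" using img[OF tD] bdf by simp
        show "g t ` X \<in> sets borel" using img[OF tD] opf by (simp add: borel_open)
      qed
      have c2: "((\<lambda>w. \<bar>(cmod ((\<lambda>_. 1::complex) w))^2 - (cmod ((\<lambda>_. a t) w))^2\<bar>)
                  has_integral measure lborel ((\<lambda>z. z + a t * cnj z) ` X)) X"
      proof (rule cv_complex[OF openX finj[OF tD]])
        show "((\<lambda>z. z + a t * cnj z) has_derivative (\<lambda>h. (\<lambda>_. 1) x * h + (\<lambda>_. a t) x * cnj h)) (at x)" for x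
          using bounded_linear_imp_has_derivative[OF linmap_facts(2)[OF at]] by simp
        show "continuous_on X (\<lambda>x. \<bar>(cmod ((\<lambda>_. 1::complex) x))^2 - (cmod ((\<lambda>_. a t) x))^2\<bar>)"
          by (simp add: continuous_on_const)
        show "bounded ((\<lambda>z. z + a t * cnj z) ` X)" by (rule bdf)
        show "(\<lambda>z. z + a t * cnj z) ` X \<in> sets borel" using opf by (simp add: borel_open)
      qed
      have sq: "(cmod (a t))^2 \<le> 1" using at by (simp add: power_le_one)
      have c2': "((\<lambda>w. 1 - (cmod (a t))^2) has_integral measure lborel ((\<lambda>z. z + a t * cnj z) ` X)) X"
        using c2 sq by simp
      have c3: "((\<lambda>w. 1 - (cmod (a t))^2) has_integral (1 - (cmod (a t))^2) * M) X"
        using has_integral_mult_right[OF hM, of "1 - (cmod (a t))^2"] by simp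
      have e1: "measure lborel ((\<lambda>z. z + a t * cnj z) ` X) = (1 - (cmod (a t))^2) * M"
        using has_integral_unique[OF c2' c3] .
      show ?thesis using c1 e1 img[OF tD] by simp
    qed
    have key2: "a (circlepath 0 r s) = 0" if r: "0 < r" "r < r0" and s: "s \<in> {0..1}" for r s
    proof -
      define \<gamma> where "\<gamma> = circlepath (0::complex) r"
      have n\<gamma>: "cmod (\<gamma> s) = r" for s using r by (simp add: \<gamma>_def circlepath norm_mult norm_exp_eq_Re)
      have r1: "r < 1" using r r0 by simp
      have \<gamma>lt: "cmod (\<gamma> s) < r0" for s using n\<gamma> r by simp
      have cont\<gamma>: "continuous_on A \<gamma>" for A by (simp add: \<gamma>_def circlepath continuous_intros)
      define Bf where "Bf s w = (cmod (deriv (g (\<gamma> s)) w))^2" for s w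
      have contBf: "continuous_on ({0..1} \<times> X) (\<lambda>p. Bf (fst p) (snd p))"
      proof -
        have "continuous_on ({0..1} \<times> X) (\<lambda>p. (\<lambda>q. deriv (g (fst q)) (snd q)) (\<gamma> (fst p), snd p))"
          by (rule continuous_on_compose2[OF Bcont])
             (use n\<gamma> r1 in \<open>auto intro!: continuous_intros continuous_on_compose2[OF cont\<gamma>]\<close>)
        then have "continuous_on ({0..1} \<times> X) (\<lambda>p. (cmod ((\<lambda>q. deriv (g (fst q)) (snd q)) (\<gamma> (fst p), snd p)))^2)"
          by (intro continuous_intros)
        then show ?thesis by (simp add: Bf_def)
      qed
      have sb: "{0..1::real} \<times> X \<in> sets borel"
      proof -
        have "{0..1::real} \<times> X \<in> sets (borel \<Otimes>\<^sub>M borel)" using Xb by (intro pair_measureI) auto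
        then show ?thesis unfolding borel_prod .
      qed
      have measF: "(\<lambda>p. indicator ({0..1} \<times> X) p *\<^sub>R Bf (fst p) (snd p)) \<in> borel_measurable borel"
        by (rule borel_measurable_continuous_on_indicator[OF sb contBf])
      define F where "F s w = ennreal (indicator ({0..1} \<times> X) (s, w) *\<^sub>R Bf s w)" for s w
      have measF1: "(\<lambda>p. F (fst p) (snd p)) \<in> borel_measurable borel"
        using measurable_compose[OF measF measurable_ennreal] by (simp add: F_def)
      have measF2: "(\<lambda>(s, w). F s w) \<in> borel_measurable (lborel \<Otimes>\<^sub>M lborel)"
        using measF1 by (simp add: lborel_prod case_prod_unfold)
      have fub: "(\<integral>\<^sup>+ w. (\<integral>\<^sup>+ s. F s w \<partial>lborel) \<partial>lborel) = (\<integral>\<^sup>+ s. (\<integral>\<^sup>+ w. F s w \<partial>lborel) \<partial>lborel)"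
        by (rule lborel_pair.Fubini'[OF measF2])
      have inner1: "(\<integral>\<^sup>+ w. F s w \<partial>lborel) = ennreal ((1 - (cmod (a (\<gamma> s)))^2) * M) * indicator {0..1} s" for s
      proof (cases "s \<in> {0..1}")
        case True
        have "(\<integral>\<^sup>+ w. F s w \<partial>lborel) = (\<integral>\<^sup>+ w. ennreal ((cmod (deriv (g (\<gamma> s)) w))^2) * indicator X w \<partial>lborel)"
          using True by (intro nn_integral_cong) (auto simp: F_def Bf_def indicator_def)
        also have "\<dots> = ennreal ((1 - (cmod (a (\<gamma> s)))^2) * M)"
          by (rule nn_integral_has_integral_lebesgue'[OF _ key1[OF \<gamma>lt]]) simp
        finally show ?thesis using True by simp
      next
        case False
        have "F s w = 0" for w using False by (auto simp: F_def indicator_def)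
        then show ?thesis using False by simp
      qed
      have cont_a\<gamma>: "continuous_on {0..1} (\<lambda>s. a (\<gamma> s))"
        by (rule continuous_on_compose2[OF acont cont\<gamma>]) (use n\<gamma> r1 in auto)
      define I1 where "I1 = integral {0..1} (\<lambda>s. (1 - (cmod (a (\<gamma> s)))^2) * M)"
      have hI1: "((\<lambda>s. (1 - (cmod (a (\<gamma> s)))^2) * M) has_integral I1) {0..1}"
        unfolding I1_def
        by (rule integrable_integral, rule integrable_continuous_interval) (intro continuous_intros cont_a\<gamma>)
      have nonneg1: "0 \<le> (1 - (cmod (a (\<gamma> s)))^2) * M" for s
      proof -
        have "cmod (a (\<gamma> s)) < 1" using r0(3)[OF \<gamma>lt[of s]] by simp
        then have "(cmod (a (\<gamma> s)))^2 \<le> 1" by (simp add: power_le_one)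
        then show ?thesis using Mpos by simp
      qed
      have LHS: "(\<integral>\<^sup>+ s. (\<integral>\<^sup>+ w. F s w \<partial>lborel) \<partial>lborel) = ennreal I1"
        unfolding inner1 by (rule nn_integral_has_integral_lebesgue'[OF nonneg1 hI1])
      have inner2: "indicator X w \<le> (\<integral>\<^sup>+ s. F s w \<partial>lborel)" for w
      proof (cases "w \<in> X")
        case True
        have "(\<integral>\<^sup>+ s. F s w \<partial>lborel) = (\<integral>\<^sup>+ s. ennreal ((cmod (deriv (g (circlepath 0 r s)) w))^2) * indicator {0..1} s \<partial>lborel)"
          using True by (intro nn_integral_cong) (auto simp: F_def Bf_def \<gamma>_def indicator_def)
        also have "\<dots> = ennreal (integral {0..1} (\<lambda>s. (cmod (deriv (g (circlepath 0 r s)) w))^2))"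
          by (rule nn_integral_has_integral_lebesgue'[OF _ sub_mean(1)[OF True r(1) r1]]) simp
        finally show ?thesis using True sub_mean(2)[OF True r(1) r1] by simp
      next
        case False
        then show ?thesis by simp
      qed
      have "ennreal M = (\<integral>\<^sup>+ w. indicator X w \<partial>lborel)" using eX Xb by simp
      also have "\<dots> \<le> (\<integral>\<^sup>+ w. (\<integral>\<^sup>+ s. F s w \<partial>lborel) \<partial>lborel)"
        by (rule nn_integral_mono) (rule inner2)
      also have "\<dots> = ennreal I1" using fub LHS by simp
      finally have MI: "M \<le> I1" using hI1 nonneg1 by (simp add: has_integral_nonneg)
      have ca2: "continuous_on {0..1} (\<lambda>s. (cmod (a (\<gamma> s)))^2)" by (intro continuous_intros cont_a\<gamma>)
      define A2 where "A2 = integral {0..1} (\<lambda>s. (cmod (a (\<gamma> s)))^2)"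
      have hA2: "((\<lambda>s. (cmod (a (\<gamma> s)))^2) has_integral A2) {0..1}"
        unfolding A2_def by (rule integrable_integral, rule integrable_continuous_interval, rule ca2)
      have A2nn: "0 \<le> A2" by (rule has_integral_nonneg[OF hA2]) simp
      have hc: "((\<lambda>s::real. M) has_integral M) {0..1}"
        using has_integral_const_real[of M "0::real" 1] by simp
      have "((\<lambda>s. M - M * (cmod (a (\<gamma> s)))^2) has_integral M - M * A2) {0..1}"
        by (intro has_integral_diff hc has_integral_mult_right hA2)
      moreover have "(\<lambda>s. M - M * (cmod (a (\<gamma> s)))^2) = (\<lambda>s. (1 - (cmod (a (\<gamma> s)))^2) * M)"
        by (auto simp: fun_eq_iff algebra_simps)
      ultimately have "I1 = M - M * A2" using hI1 has_integral_unique by metis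
      then have "M * A2 \<le> 0" using MI by simp
      then have "A2 = 0" using Mpos A2nn by (simp add: mult_le_0_iff)
      then have h0: "((\<lambda>s. (cmod (a (\<gamma> s)))^2) has_integral 0) (cbox 0 1)"
        using hA2 by simp
      have "(cmod (a (\<gamma> s)))^2 = 0"
        by (rule has_integral_0_cbox_imp_0[OF _ _ h0]) (use ca2 s in auto)
      then show ?thesis by (simp add: \<gamma>_def)
    qed
    have key3: "a t = 0" if t: "t \<in> ball 0 r0" for t
    proof (cases "t = 0")
      case True then show ?thesis using a0 by simp
    next
      case False
      then have rp: "0 < cmod t" "cmod t < r0" using t by auto
      have "t \<in> path_image (circlepath 0 (cmod t))" by simp
      then obtain s where s: "s \<in> {0..1}" "t = circlepath 0 (cmod t) s"
        unfolding path_image_def by auto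
      show ?thesis using key2[OF rp s(1)] s(2) by simp
    qed
    show "\<forall>t\<in>ball 0 1. a t = 0"
    proof
      fix t :: complex assume t: "t \<in> ball 0 1"
      show "a t = 0"
      proof (rule analytic_continuation_open[of "ball 0 r0" "ball 0 1" a "\<lambda>_. 0"])
        show "ball (0::complex) r0 \<subseteq> ball 0 1" using r0 by auto
      qed (use r0 t ahol key3 in auto)
    qed
  next
    assume a0all: "\<forall>t\<in>ball 0 1. a t = 0"
    show "trivial_motion (\<lambda>t z. z + a t * cnj z) X"
      unfolding trivial_motion_def
    proof (intro exI[of _ "\<lambda>t z. z"] conjI)
      show "holomorphic_motion (\<lambda>t z. z) X" by (simp add: holomorphic_motion_def)
      show "holomorphic2_on (\<lambda>t z. z) (ball 0 1 \<times> X)"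
        unfolding holomorphic2_on_def
      proof (intro ballI exI)
        fix p :: "complex \<times> complex"
        have "(snd has_derivative snd) (at p)" by (rule bounded_linear_imp_has_derivative[OF bounded_linear_snd])
        moreover have "(\<lambda>(t, z). z) = (snd :: complex \<times> complex \<Rightarrow> complex)" by auto
        moreover have "(\<lambda>(h, k). 0 * h + 1 * k) = (snd :: complex \<times> complex \<Rightarrow> complex)" by auto
        ultimately show "((\<lambda>(t, z). z) has_derivative (\<lambda>(h, k). 0 * h + 1 * k)) (at p)" by simp
      qed
      show "motion_graph (\<lambda>t z. z) X = motion_graph (\<lambda>t z. z + a t * cnj z) X"
        unfolding motion_graph_def using a0all by (intro image_cong) auto
    qed
  qed
qed


end
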